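(* Let $m$ be a positive integer, $\alpha>0$ and $\beta_1,\beta_2>0$. Then $$\int_0^{\infty}e^{-\alpha x}J_0(\beta_1\sqrt{x})J_m(\beta_2\sqrt{x})\,x^{m/2}\,dx=\frac1\alpha e^{-\beta_2^2/4\alpha}\left.\left(\frac{d}{dx}\right)^{m}\left[e^{-x}\left(\frac{x}{\alpha}\right)^{m/2}I_m\!\left(\beta_2\sqrt{\frac{x}{\alpha}}\right)\right]\right|_{x=\beta_1^2/4\alpha}$$ $$=\frac1\alpha\left(\frac{\beta_2}{2\alpha}\right)^{m}e^{-\frac{\beta_1^2+\beta_2^2}{4\alpha}}\sum_{n=0}^{m}(-1)^n\binom{m}{n}\left(\frac{\beta_1}{\beta_2}\right)^{n}I_n\!\left(\frac{\beta_1\beta_2}{2\alpha}\right).$$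
   Context: $J_k$ and $I_k$ denote the Bessel and modified Bessel functions of the first kind of integer order $k$. *)

theory Defs
  imports "HOL-Analysis.Analysis"
begin

definition besselJ :: "nat \<Rightarrow> real \<Rightarrow> real" where
  "besselJ k x = (\<Sum>j. (-1) ^ j / (fact j * fact (j + k)) * (x / 2) ^ (2 * j + k))"

definition besselI :: "nat \<Rightarrow> real \<Rightarrow> real" where
  "besselI k x = (\<Sum>j. 1 / (fact j * fact (j + k)) * (x / 2) ^ (2 * j + k))"

end

theory Submission
  imports Defs "HOL-Probability.Distributions"
begin


lemma coefA:
  fixes i m k :: nat and y :: real
  shows "(\<Sum>l\<le>k. (fact (i+m) * ((-1)^l * real (i choose l)) / fact (l+m) * y^l) * ((-y)^(k-l) / fact (k-l)))
       = (-y)^k * fact (i+k+m) / (fact k * fact (k+m))"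
proof -
  have t: "(fact (i+m) * ((-1)^l * real (i choose l)) / fact (l+m) * y^l) * ((-y)^(k-l) / fact (k-l))
      = (-y)^k * fact(i+m) / fact(k+m) * (real (i choose l) * real ((k+m) choose (k-l)))" if "l \<le> k" for l
  proof -
    have b: "real ((k+m) choose (k-l)) = fact (k+m) / (fact (k-l) * fact (l+m))"
      using binomial_fact[of "k-l" "k+m", where 'a=real] that by (simp add: algebra_simps)
    have p: "(-y)^k = (-1)^l * y^l * (-y)^(k-l)"
      using that by (metis (no_types, lifting) le_add_diff_inverse mult.assoc power_add power_minus)
    show ?thesis unfolding b p by (simp add: field_simps)
  qed
  have "(\<Sum>l\<le>k. (fact (i+m) * ((-1)^l * real (i choose l)) / fact (l+m) * y^l) * ((-y)^(k-l) / fact (k-l)))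
     = (\<Sum>l\<le>k. (-y)^k * fact(i+m) / fact(k+m) * (real (i choose l) * real ((k+m) choose (k-l))))"
    by (rule sum.cong[OF refl], rule t) simp
  also have "\<dots> = (-y)^k * fact(i+m) / fact(k+m) * real (\<Sum>l\<le>k. (i choose l) * ((k+m) choose (k-l)))"
    by (simp add: sum_distrib_left)
  also have "(\<Sum>l\<le>k. (i choose l) * ((k+m) choose (k-l))) = (i + (k+m)) choose k"
    by (rule vandermonde)
  also have "real ((i + (k+m)) choose k) = fact (i+k+m) / (fact k * fact (i+m))"
    using binomial_fact[of k "i+(k+m)", where 'a=real] by (simp add: algebra_simps)
  finally show ?thesis by (simp add: field_simps)
qed

definition hc :: "real \<Rightarrow> nat \<Rightarrow> nat \<Rightarrow> real" where
  "hc y n N = (if n \<le> N then y^(N-n) / (fact (N-n) * fact N) else 0)"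

definition PP :: "real \<Rightarrow> nat \<Rightarrow> nat \<Rightarrow> real" where
  "PP y m i = (\<Sum>j\<le>i. (-1)^j * real (i choose j) * y^j / fact (j+m))"

lemma coefW:
  fixes y :: real and m i :: nat
  shows "(\<Sum>k\<le>i. (-1)^k / fact k * (\<Sum>n\<le>m. (-1)^n * real (m choose n) * hc y n (i-k)))
       = (-1)^i * fact (i+m) / (fact i * fact i) * PP y m i"
proof -
  define G where "G k n = (-1)^k / fact k * ((-1)^n * real (m choose n) * hc y n (i-k))" for k n
  define H where "H j n = (-1)^(i-j) * real (m choose n) * real (i choose (i-j-n)) * y^j / (fact i * fact j)" for j n
  define Sig where "Sig = (SIGMA k:{..i}. {..i-k})"
  have L1: "(\<Sum>n\<le>m. G k n) = (\<Sum>n\<le>i-k. G k n)" if "k \<le> i" for k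
  proof -
    have "(\<Sum>n\<le>m. G k n) = (\<Sum>n\<le>m+i. G k n)"
      by (rule sum.mono_neutral_left) (auto simp: G_def)
    also have "\<dots> = (\<Sum>n\<le>i-k. G k n)"
      by (rule sum.mono_neutral_right) (auto simp: G_def hc_def)
    finally show ?thesis .
  qed
  have "(\<Sum>k\<le>i. (-1)^k / fact k * (\<Sum>n\<le>m. (-1)^n * real (m choose n) * hc y n (i-k)))
      = (\<Sum>k\<le>i. \<Sum>n\<le>m. G k n)"
    by (simp add: G_def sum_distrib_left)
  also have "\<dots> = (\<Sum>k\<le>i. \<Sum>n\<le>i-k. G k n)"
    by (rule sum.cong[OF refl]) (simp add: L1)
  also have "\<dots> = (\<Sum>(k,n)\<in>Sig. G k n)"
    unfolding Sig_def by (rule sum.Sigma) auto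
  also have "\<dots> = (\<Sum>(j,n)\<in>Sig. H j n)"
  proof (rule sym, rule sum.reindex_bij_witness[where i="\<lambda>(j,n). (i-j-n, n)" and j="\<lambda>(j,n). (i-j-n, n)"])
    fix a assume "a \<in> Sig"
    then show "(case (case a of (j, n) \<Rightarrow> (i - j - n, n)) of (j, n) \<Rightarrow> (i - j - n, n)) = a"
      "(case a of (j, n) \<Rightarrow> (i - j - n, n)) \<in> Sig"
      by (auto simp: Sig_def)
  next
    fix a assume a: "a \<in> Sig"
    obtain j n where jn: "a = (j,n)" by (cases a)
    with a have le: "j + n \<le> i" by (auto simp: Sig_def)
    have c: "real (i choose (i-j-n)) = fact i / (fact (i-j-n) * fact (j+n))"
      using binomial_fact[of "i-j-n" i, where 'a=real] le by (simp add: algebra_simps)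
    have e: "i-j-n+n = i-j" using le by simp
    have s2: "(-1::real)^(i-j-n) * (-1)^n = (-1)^(i-j)"
      by (metis power_add e)
    have "G (i-j-n) n = (-1)^(i-j-n) * (-1)^n * real (m choose n) * y^j / (fact (i-j-n) * fact j * fact (j+n))"
      unfolding G_def hc_def using le by (simp add: algebra_simps)
    also have "\<dots> = H j n"
      unfolding H_def c s2 by (simp add: field_simps)
    finally show "(case (case a of (j, n) \<Rightarrow> (i - j - n, n)) of (k, n) \<Rightarrow> G k n) = (case a of (j, n) \<Rightarrow> H j n)"
      by (simp add: jn)
  qed (auto simp: Sig_def)
  also have "\<dots> = (\<Sum>j\<le>i. \<Sum>n\<le>i-j. H j n)"
    unfolding Sig_def by (rule sum.Sigma[symmetric]) auto
  also have "\<dots> = (\<Sum>j\<le>i. (-1)^i * fact (i+m) / (fact i * fact i) * ((-1)^j * real (i choose j) * y^j / fact (j+m)))"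
  proof (rule sum.cong[OF refl])
    fix j assume "j \<in> {..i}"
    then have le: "j \<le> i" by simp
    have v: "(\<Sum>n\<le>i-j. (m choose n) * (i choose (i-j-n))) = (m + i) choose (i-j)"
      using vandermonde[of m i "i-j"] by simp
    have A0: "(\<Sum>n\<le>i-j. H j n) = (-1)^(i-j) * y^j / (fact i * fact j) * real (\<Sum>n\<le>i-j. (m choose n) * (i choose (i-j-n)))"
      unfolding H_def by (simp add: sum_distrib_left field_simps)
    have A1: "real (\<Sum>n\<le>i-j. (m choose n) * (i choose (i-j-n))) = fact (i+m) / (fact (i-j) * fact (j+m))"
      unfolding v using binomial_fact[of "i-j" "m+i", where 'a=real] le by (simp add: algebra_simps)
    have cij: "real (i choose j) = fact i / (fact j * fact (i-j))"
      using binomial_fact[of j i, where 'a=real] le by simp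
    have sg: "(-1::real)^(i-j) = (-1)^i * (-1)^j"
      using le by (cases "even j") (simp_all add: power_diff)
    show "(\<Sum>n\<le>i-j. H j n) = (-1)^i * fact (i+m) / (fact i * fact i) * ((-1)^j * real (i choose j) * y^j / fact (j+m))"
      unfolding A0 A1 cij sg by (simp add: field_simps)
  qed
  also have "\<dots> = (-1)^i * fact (i+m) / (fact i * fact i) * PP y m i"
    unfolding PP_def by (simp add: sum_distrib_left)
  finally show ?thesis .
qed

definition hh :: "real \<Rightarrow> nat \<Rightarrow> real \<Rightarrow> real" where
  "hh y n x = (\<Sum>N. hc y n N * x^N)"

lemma summable_expC: "summable (\<lambda>j. C * X^j / fact j :: real)"
  using summable_mult[OF summable_exp[of X], of C] by (simp add: field_simps)

lemma exp_sums: "(\<lambda>k. z^k / fact k) sums exp (z::real)"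
  using exp_converges[of z] by (simp add: divide_inverse mult.commute)

lemma summable_abs_exp: "summable (\<lambda>k. \<bar>z^k / fact k\<bar>)" for z :: real
  using summable_expC[of 1 "\<bar>z\<bar>"] by (simp add: power_abs)

lemma hc_bound: "\<bar>hc y n N\<bar> \<le> (max 1 \<bar>y\<bar>)^N / fact N"
proof (cases "n \<le> N")
  case True
  have "\<bar>y\<bar>^(N-n) \<le> (max 1 \<bar>y\<bar>)^(N-n)" by (rule power_mono) auto
  also have "\<dots> \<le> (max 1 \<bar>y\<bar>)^N" by (rule power_increasing) auto
  finally have a: "\<bar>y\<bar>^(N-n) \<le> (max 1 \<bar>y\<bar>)^N" .
  have "\<bar>hc y n N\<bar> = \<bar>y\<bar>^(N-n) / (fact (N-n) * fact N)"
    using True by (simp add: hc_def power_abs)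
  also have "\<dots> \<le> \<bar>y\<bar>^(N-n) / fact N"
    by (rule divide_left_mono) (auto simp: fact_ge_1)
  also have "\<dots> \<le> (max 1 \<bar>y\<bar>)^N / fact N"
    by (rule divide_right_mono[OF a]) auto
  finally show ?thesis .
qed (simp add: hc_def)

lemma hc_summable_abs: "summable (\<lambda>N. \<bar>hc y n N * x^N\<bar>)"
proof (rule summable_comparison_test[OF _ summable_expC[of 1 "max 1 \<bar>y\<bar> * \<bar>x\<bar>"]])
  show "\<exists>N0. \<forall>N\<ge>N0. norm \<bar>hc y n N * x ^ N\<bar> \<le> 1 * (max 1 \<bar>y\<bar> * \<bar>x\<bar>) ^ N / fact N"
  proof (intro exI allI impI)
    fix N :: nat
    have "norm \<bar>hc y n N * x ^ N\<bar> = \<bar>hc y n N\<bar> * \<bar>x\<bar>^N" by (simp add: abs_mult power_abs)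
    also have "\<dots> \<le> (max 1 \<bar>y\<bar>)^N / fact N * \<bar>x\<bar>^N"
      by (rule mult_right_mono[OF hc_bound]) simp
    also have "\<dots> = 1 * (max 1 \<bar>y\<bar> * \<bar>x\<bar>) ^ N / fact N" by (simp add: power_mult_distrib)
    finally show "norm \<bar>hc y n N * x ^ N\<bar> \<le> 1 * (max 1 \<bar>y\<bar> * \<bar>x\<bar>) ^ N / fact N" .
  qed
qed

lemma hc_summable: "summable (\<lambda>N. hc y n N * x^N)"
  by (rule summable_rabs_cancel[OF hc_summable_abs])

lemma kummerA:
  fixes y :: real and i m :: nat
  shows "(\<lambda>J. (-y)^J * fact (i+J+m) / (fact J * fact (J+m))) sums (exp (-y) * (fact (i+m) * PP y m i))"
proof -
  define a where "a l = fact (i+m) * ((-1)^l * real (i choose l)) / fact (l+m) * y^l" for l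
  define b where "b k = (-y)^k / fact k" for k
  have a0: "a l = 0" if "l \<notin> {..i}" for l using that by (simp add: a_def)
  have sa: "summable (\<lambda>k. norm (a k))"
    by (rule summable_finite[of "{..i}"]) (auto simp: a0)
  have sb: "summable (\<lambda>k. norm (b k))"
    unfolding b_def using summable_abs_exp[of "-y"] by simp
  have Sa: "(\<Sum>k. a k) = fact (i+m) * PP y m i"
    by (subst suminf_finite[of "{..i}"]) (auto simp: a0 a_def PP_def sum_distrib_left field_simps)
  have Sb: "(\<Sum>k. b k) = exp (-y)"
    unfolding b_def using exp_sums[of "-y"] by (simp add: sums_iff)
  have "(\<lambda>k. \<Sum>l\<le>k. a l * b (k - l)) sums ((\<Sum>k. a k) * (\<Sum>k. b k))"
    by (rule Cauchy_product_sums[OF sa sb])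
  moreover have "(\<Sum>l\<le>k. a l * b (k - l)) = (-y)^k * fact (i+k+m) / (fact k * fact (k+m))" for k
    unfolding a_def b_def by (rule coefA)
  ultimately show ?thesis unfolding Sa Sb by (simp add: mult.commute)
qed

lemma Wsum:
  fixes x y :: real and m :: nat
  shows "(\<lambda>i. (-x)^i * fact (i+m) / (fact i * fact i) * PP y m i) sums
           (exp (-x) * (\<Sum>n\<le>m. (-1)^n * real (m choose n) * hh y n x))"
proof -
  define q where "q N = (\<Sum>n\<le>m. (-1)^n * real (m choose n) * hc y n N)" for N
  define a where "a k = (-x)^k / fact k" for k
  define b where "b N = q N * x^N" for N
  have sa: "summable (\<lambda>k. norm (a k))"
    unfolding a_def using summable_abs_exp[of "-x"] by simp
  have bb: "b N = (\<Sum>n\<le>m. (-1)^n * real (m choose n) * (hc y n N * x^N))" for N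
    unfolding b_def q_def by (simp add: sum_distrib_right mult.assoc)
  have sb: "summable (\<lambda>k. norm (b k))"
  proof (rule summable_comparison_test[OF _ summable_sum[of "{..m}" "\<lambda>n N. real (m choose n) * \<bar>hc y n N * x^N\<bar>"]])
    show "\<exists>N0. \<forall>N\<ge>N0. norm (norm (b N)) \<le> (\<Sum>n\<le>m. real (m choose n) * \<bar>hc y n N * x ^ N\<bar>)"
    proof (intro exI allI impI)
      fix N :: nat
      have "norm (norm (b N)) \<le> (\<Sum>n\<le>m. \<bar>(-1)^n * real (m choose n) * (hc y n N * x^N)\<bar>)"
        unfolding bb by (simp add: sum_abs)
      also have "\<dots> = (\<Sum>n\<le>m. real (m choose n) * \<bar>hc y n N * x ^ N\<bar>)"
        by (simp add: abs_mult)
      finally show "norm (norm (b N)) \<le> (\<Sum>n\<le>m. real (m choose n) * \<bar>hc y n N * x ^ N\<bar>)" .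
    qed
  qed (intro summable_mult hc_summable_abs)
  have Sa: "(\<Sum>k. a k) = exp (-x)"
    unfolding a_def using exp_sums[of "-x"] by (simp add: sums_iff)
  have Sb: "(\<Sum>k. b k) = (\<Sum>n\<le>m. (-1)^n * real (m choose n) * hh y n x)"
  proof -
    have "(\<Sum>k. b k) = (\<Sum>n\<le>m. \<Sum>N. (-1)^n * real (m choose n) * (hc y n N * x^N))"
      unfolding bb by (rule suminf_sum) (intro summable_mult hc_summable)
    also have "\<dots> = (\<Sum>n\<le>m. (-1)^n * real (m choose n) * hh y n x)"
      unfolding hh_def by (rule sum.cong[OF refl], rule suminf_mult[OF hc_summable])
    finally show ?thesis .
  qed
  have "(\<lambda>k. \<Sum>l\<le>k. a l * b (k - l)) sums ((\<Sum>k. a k) * (\<Sum>k. b k))"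
    by (rule Cauchy_product_sums[OF sa sb])
  moreover have "(\<Sum>l\<le>k. a l * b (k - l)) = (-x)^k * fact (k+m) / (fact k * fact k) * PP y m k" for k
  proof -
    have "(\<Sum>l\<le>k. a l * b (k - l)) = (\<Sum>l\<le>k. x^k * ((-1)^l / fact l * q (k-l)))"
    proof (rule sum.cong[OF refl])
      fix l assume "l \<in> {..k}"
      then have "x^k = x^l * x^(k-l)" by (simp add: power_add[symmetric])
      then show "a l * b (k - l) = x^k * ((-1)^l / fact l * q (k-l))"
        unfolding a_def b_def by (simp add: power_minus' field_simps)
    qed
    also have "\<dots> = x^k * (\<Sum>l\<le>k. (-1)^l / fact l * q (k-l))"
      by (simp add: sum_distrib_left)
    also have "\<dots> = x^k * ((-1)^k * fact (k+m) / (fact k * fact k) * PP y m k)"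
      unfolding q_def by (simp only: coefW)
    also have "\<dots> = (-x)^k * fact (k+m) / (fact k * fact k) * PP y m k"
      by (simp add: power_minus')
    finally show ?thesis .
  qed
  ultimately show ?thesis unfolding Sa Sb by simp
qed

lemma hh_fun: "hh y n = (\<lambda>x. \<Sum>N. hc y n N * x^N)"
  by (rule ext) (simp add: hh_def)

lemma hh_deriv:
  assumes n: "1 \<le> n"
  shows "DERIV (hh y n) x :> hh y (n-1) x"
proof -
  obtain n' where n': "n = Suc n'" using n by (cases n) auto
  have d: "diffs (hc y n) = hc y (n-1)"
  proof (rule ext)
    fix N
    show "diffs (hc y n) N = hc y (n-1) N"
    proof (cases "n' \<le> N")
      case True
      have f: "fact (Suc N) = (real (Suc N)) * fact N" by (rule fact_Suc)
      show ?thesis using True unfolding n' diffs_def hc_def f by (simp del: of_nat_Suc fact_Suc)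
    qed (simp add: n' diffs_def hc_def)
  qed
  have "DERIV (\<lambda>x. \<Sum>N. hc y n N * x^N) x :> (\<Sum>N. diffs (hc y n) N * x^N)"
    by (rule termdiffs_strong_converges_everywhere) (rule hc_summable)
  then show ?thesis by (simp add: d hh_fun hh_def)
qed

lemma pascal_sum:
  fixes u :: "nat \<Rightarrow> real"
  shows "(\<Sum>l\<le>Suc k. real (Suc k choose l) * (-1)^l * u l)
       = (\<Sum>l\<le>k. real (k choose l) * (-1)^l * u l) - (\<Sum>l\<le>k. real (k choose l) * (-1)^l * u (Suc l))"
proof -
  define g where "g l = real (k choose l) * (-1)^l * u l" for l
  have t: "real (Suc k choose Suc l) * (-1)^(Suc l) * u (Suc l) = g (Suc l) - real (k choose l) * (-1)^l * u (Suc l)" for l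
    by (simp add: g_def algebra_simps)
  have "(\<Sum>l\<le>Suc k. real (Suc k choose l) * (-1)^l * u l) = u 0 + (\<Sum>l\<le>k. real (Suc k choose Suc l) * (-1)^(Suc l) * u (Suc l))"
    by (subst sum.atMost_Suc_shift) simp
  also have "\<dots> = u 0 + (\<Sum>l\<le>k. g (Suc l)) - (\<Sum>l\<le>k. real (k choose l) * (-1)^l * u (Suc l))"
    by (simp only: t sum_subtractf)
  also have "u 0 + (\<Sum>l\<le>k. g (Suc l)) = (\<Sum>l\<le>k. g l)"
  proof -
    have "(\<Sum>l\<le>Suc k. g l) = g 0 + (\<Sum>l\<le>k. g (Suc l))" by (rule sum.atMost_Suc_shift)
    moreover have "(\<Sum>l\<le>Suc k. g l) = (\<Sum>l\<le>k. g l) + g (Suc k)" by (rule sum.atMost_Suc)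
    moreover have "g (Suc k) = 0" "g 0 = u 0" by (simp_all add: g_def)
    ultimately show ?thesis by simp
  qed
  finally show ?thesis by (simp add: g_def)
qed

lemma Gderiv:
  fixes c y :: real and m :: nat
  shows "k \<le> m \<Longrightarrow> (deriv ^^ k) (\<lambda>x. c * exp (-x) * hh y m x)
     = (\<lambda>x. c * exp (-x) * (\<Sum>l\<le>k. real (k choose l) * (-1)^l * hh y (m-k+l) x))"
proof (induction k)
  case 0
  show ?case by simp
next
  case (Suc k)
  then have km: "k < m" by simp
  have IH: "(deriv ^^ k) (\<lambda>x. c * exp (-x) * hh y m x)
     = (\<lambda>x. c * exp (-x) * (\<Sum>l\<le>k. real (k choose l) * (-1)^l * hh y (m-k+l) x))"
    using Suc by simp
  have D: "DERIV (\<lambda>x. c * exp (-x) * (\<Sum>l\<le>k. real (k choose l) * (-1)^l * hh y (m-k+l) x)) x :>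
      c * exp (-x) * (\<Sum>l\<le>Suc k. real (Suc k choose l) * (-1)^l * hh y (m - Suc k + l) x)" for x
  proof -
    have hd: "DERIV (\<lambda>x. \<Sum>l\<le>k. real (k choose l) * (-1)^l * hh y (m-k+l) x) x :>
        (\<Sum>l\<le>k. real (k choose l) * (-1)^l * hh y (m-k+l-1) x)"
      by (intro DERIV_sum DERIV_cmult hh_deriv) (use km in auto)
    have ed: "DERIV (\<lambda>x. c * exp (-x)) x :> c * (- exp (-x))"
      by (auto intro!: derivative_eq_intros)
    have e1: "hh y (m-k+l-1) x = hh y (m - Suc k + l) x" for l using km
      by (metis Suc_diff_Suc add_Suc diff_Suc_1)
    have e2: "hh y (m-k+l) x = hh y (m - Suc k + Suc l) x" for l using km
      by (simp add: Suc_diff_Suc)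
    have P: "(\<Sum>l\<le>Suc k. real (Suc k choose l) * (-1)^l * hh y (m - Suc k + l) x)
       = (\<Sum>l\<le>k. real (k choose l) * (-1)^l * hh y (m-k+l-1) x) - (\<Sum>l\<le>k. real (k choose l) * (-1)^l * hh y (m-k+l) x)"
      unfolding e1 e2 by (rule pascal_sum)
    show ?thesis
      using DERIV_mult[OF ed hd] unfolding P by (simp add: algebra_simps)
  qed
  have "(deriv ^^ Suc k) (\<lambda>x. c * exp (-x) * hh y m x) = deriv ((deriv ^^ k) (\<lambda>x. c * exp (-x) * hh y m x))"
    by simp
  also have "\<dots> = (\<lambda>x. c * exp (-x) * (\<Sum>l\<le>Suc k. real (Suc k choose l) * (-1)^l * hh y (m - Suc k + l) x))"
    unfolding IH by (rule ext, rule DERIV_imp_deriv[OF D])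
  finally show ?case .
qed

lemma deriv_funpow_cong:
  assumes S: "open S" and eq: "\<And>x. x \<in> S \<Longrightarrow> f x = g x"
  shows "x \<in> S \<Longrightarrow> (deriv ^^ k) f x = ((deriv ^^ k) g x :: real)"
proof (induction k arbitrary: x)
  case 0
  then show ?case using eq by simp
next
  case (Suc k)
  have ev: "eventually (\<lambda>z. (deriv ^^ k) f z = (deriv ^^ k) g z) (nhds x)"
    using eventually_nhds_in_open[OF S Suc.prems] by (rule eventually_mono) (rule Suc.IH)
  show ?case by (simp add: deriv_cong_ev[OF ev refl])
qed



lemma sqrt_pow_powr:
  fixes t :: real assumes t: "t > 0"
  shows "sqrt t ^ (2*j+m) * t powr (real m / 2) = t^(j+m)"
proof -
  have a: "sqrt t ^ (2*j) = t^j" by (simp add: power_mult t less_imp_le)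
  have b: "sqrt t ^ m = t powr (real m / 2)"
    using powr_power[of t "1/2" m] t by (simp add: powr_half_sqrt[symmetric] less_imp_le)
  have c: "t powr (real m / 2) * t powr (real m / 2) = t^m"
    using t by (simp add: powr_add[symmetric] powr_realpow)
  have "sqrt t ^ (2*j+m) * t powr (real m / 2) = t^j * (t powr (real m / 2) * t powr (real m / 2))"
    by (simp add: power_add a b)
  also have "\<dots> = t^(j+m)" by (simp add: c power_add)
  finally show ?thesis .
qed

lemma bessel_summable_abs:
  fixes z :: real
  shows "summable (\<lambda>j. \<bar>1 / (fact j * fact (j + k)) * (z / 2) ^ (2 * j + k)\<bar>)"
proof (rule summable_comparison_test[OF _ summable_expC[of "\<bar>z/2\<bar>^k" "(z/2)^2"]])
  show "\<exists>N. \<forall>n\<ge>N. norm \<bar>1 / (fact n * fact (n + k)) * (z / 2) ^ (2 * n + k)\<bar> \<le> \<bar>z / 2\<bar> ^ k * ((z / 2)\<^sup>2) ^ n / fact n"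
  proof (intro exI allI impI)
    fix n :: nat
    have "norm \<bar>1 / (fact n * fact (n + k)) * (z / 2) ^ (2 * n + k)\<bar> = \<bar>z/2\<bar>^k * ((z / 2)\<^sup>2) ^ n / (fact n * fact (n+k))"
      by (simp add: abs_mult power_add power_mult power_abs power2_eq_square)
    also have "\<dots> \<le> \<bar>z/2\<bar>^k * ((z / 2)\<^sup>2) ^ n / fact n"
      by (rule divide_left_mono) (auto simp: fact_ge_1 mult_pos_pos)
    finally show "norm \<bar>1 / (fact n * fact (n + k)) * (z / 2) ^ (2 * n + k)\<bar> \<le> \<bar>z / 2\<bar> ^ k * ((z / 2)\<^sup>2) ^ n / fact n" .
  qed
qed

lemma besselI_sums: "(\<lambda>j. 1 / (fact j * fact (j + k)) * (z / 2) ^ (2 * j + k)) sums besselI k z"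
  unfolding besselI_def by (rule summable_sums, rule summable_rabs_cancel, rule bessel_summable_abs)

lemma besselJ_sums: "(\<lambda>j. (-1) ^ j / (fact j * fact (j + k)) * (z / 2) ^ (2 * j + k)) sums besselJ k z"
proof -
  have "summable (\<lambda>j. \<bar>(-1) ^ j / (fact j * fact (j + k)) * (z / 2) ^ (2 * j + k)\<bar>)"
    using bessel_summable_abs[of k z] by (simp add: abs_mult)
  then show ?thesis unfolding besselJ_def by (rule summable_sums[OF summable_rabs_cancel])
qed

lemma J0_sums:
  fixes x b1 :: real assumes x: "x \<ge> 0"
  shows "(\<lambda>i. (-1)^i / (fact i * fact i) * (b1^2/4 * x)^i) sums besselJ 0 (b1 * sqrt x)"
proof -
  have "(b1 * sqrt x / 2) ^ (2 * i) = (b1^2/4 * x)^i" for i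
    using x by (simp add: power_mult power_mult_distrib power_divide)
  then show ?thesis using besselJ_sums[of 0 "b1 * sqrt x"] by simp
qed

lemma Jm_sums:
  fixes x b2 :: real and m :: nat assumes x: "x > 0"
  shows "(\<lambda>j. ((-1)^j / (fact j * fact (j+m)) * (b2/2)^(2*j+m)) * x^(j+m)) sums (besselJ m (b2 * sqrt x) * x powr (real m / 2))"
proof -
  have eq: "(-1) ^ j / (fact j * fact (j + m)) * (b2 * sqrt x / 2) ^ (2 * j + m) * x powr (real m / 2)
      = ((-1)^j / (fact j * fact (j+m)) * (b2/2)^(2*j+m)) * x^(j+m)" for j
  proof -
    have "(b2 * sqrt x / 2) ^ (2 * j + m) = (b2/2)^(2*j+m) * sqrt x ^ (2*j+m)"
      by (simp add: power_mult_distrib[symmetric])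
    then show ?thesis using sqrt_pow_powr[OF x, of j m] by (simp add: mult.assoc)
  qed
  from sums_mult2[OF besselJ_sums[of m "b2 * sqrt x"], of "x powr (real m / 2)"] show ?thesis
    by (simp only: eq)
qed

lemma hh_shift: "(\<lambda>j. hc y n (j+n) * x^(j+n)) sums hh y n x"
proof -
  have "(\<lambda>N. hc y n N * x^N) sums hh y n x"
    unfolding hh_def by (rule summable_sums[OF hc_summable])
  moreover have "(\<Sum>i<n. hc y n i * x^i) = 0" by (simp add: hc_def)
  ultimately show ?thesis
    by (intro sums_iff_shift[where f="\<lambda>N. hc y n N * x^N", THEN iffD2]) simp
qed

lemma Im_eq:
  fixes x b2 \<alpha> :: real and m :: nat assumes x: "x > 0" and \<alpha>: "\<alpha> > 0"
  shows "(x/\<alpha>) powr (real m / 2) * besselI m (b2 * sqrt (x/\<alpha>)) = (b2/(2*\<alpha>))^m * hh (b2^2/(4*\<alpha>)) m x"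
proof -
  define y where "y = b2^2/(4*\<alpha>)"
  have t: "x/\<alpha> > 0" using x \<alpha> by simp
  have "(x/\<alpha>) powr (real m / 2) * (1 / (fact j * fact (j + m)) * (b2 * sqrt (x/\<alpha>) / 2) ^ (2 * j + m))
      = (b2/(2*\<alpha>))^m * (hc y m (j+m) * x^(j+m))" for j
  proof -
    have "(b2 * sqrt (x/\<alpha>) / 2) ^ (2 * j + m) = (b2/2)^(2*j+m) * sqrt (x/\<alpha>) ^ (2*j+m)"
      by (simp add: power_mult_distrib[symmetric])
    then have "(x/\<alpha>) powr (real m / 2) * (1 / (fact j * fact (j + m)) * (b2 * sqrt (x/\<alpha>) / 2) ^ (2 * j + m))
       = (b2/2)^(2*j+m) * (x/\<alpha>)^(j+m) / (fact j * fact (j + m))"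
      using sqrt_pow_powr[OF t, of j m] by (simp add: field_simps)
    also have "\<dots> = (b2/(2*\<alpha>))^m * (hc y m (j+m) * x^(j+m))"
    proof -
      have p1a: "(b2/2)^2 = b2^2/4" by (simp add: power_divide)
      have p1: "(b2/2)^(2*j+m) = (b2^2/4)^j * (b2/2)^m" by (simp add: power_add power_mult p1a)
      have p2: "(x/\<alpha>)^(j+m) = x^(j+m)/(\<alpha>^j*\<alpha>^m)" by (simp add: power_divide power_add)
      have p3: "(b2/(2*\<alpha>))^m = (b2/2)^m/\<alpha>^m" by (simp add: power_divide power_mult_distrib)
      have p4: "y^j = (b2^2/4)^j/\<alpha>^j" unfolding y_def by (simp add: power_divide power_mult_distrib)
      show ?thesis unfolding hc_def p1 p2 p3 using \<alpha> by (simp add: p4 field_simps)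
    qed
    finally show ?thesis .
  qed
  then have "(\<lambda>j. (x/\<alpha>) powr (real m / 2) * (1 / (fact j * fact (j + m)) * (b2 * sqrt (x/\<alpha>) / 2) ^ (2 * j + m)))
      sums ((b2/(2*\<alpha>))^m * hh y m x)"
    using sums_mult[OF hh_shift[of y m x], of "(b2/(2*\<alpha>))^m"] by simp
  moreover have "(\<lambda>j. (x/\<alpha>) powr (real m / 2) * (1 / (fact j * fact (j + m)) * (b2 * sqrt (x/\<alpha>) / 2) ^ (2 * j + m)))
      sums ((x/\<alpha>) powr (real m / 2) * besselI m (b2 * sqrt (x/\<alpha>)))"
    by (rule sums_mult[OF besselI_sums])
  ultimately show ?thesis unfolding y_def using sums_unique2 by blast
qed

lemma In_eq:
  fixes b1 b2 \<alpha> :: real and n :: nat assumes b2: "b2 > 0" and \<alpha>: "\<alpha> > 0"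
  shows "(b1/b2)^n * besselI n (b1 * b2 / (2*\<alpha>)) = hh (b2^2/(4*\<alpha>)) n (b1^2/(4*\<alpha>))"
proof -
  define y where "y = b2^2/(4*\<alpha>)"
  define x where "x = b1^2/(4*\<alpha>)"
  have "(b1/b2)^n * (1 / (fact j * fact (j + n)) * (b1 * b2 / (2*\<alpha>) / 2) ^ (2 * j + n))
      = hc y n (j+n) * x^(j+n)" for j
  proof -
    have "(b1/b2)^n * (b1 * b2 / (2*\<alpha>) / 2) ^ (2 * j + n) = ((b1 * b2 / (4*\<alpha>))^2)^j * ((b1/b2) * (b1 * b2 / (4*\<alpha>)))^n"
      by (simp add: power_add power_mult power_mult_distrib[symmetric])
    also have "\<dots> = (x*y)^j * x^n"
      unfolding x_def y_def using b2 \<alpha> by (simp add: power2_eq_square field_simps)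
    finally have e: "(b1/b2)^n * (b1 * b2 / (2*\<alpha>) / 2) ^ (2 * j + n) = (x*y)^j * x^n" .
    have "(b1/b2)^n * (1 / (fact j * fact (j + n)) * (b1 * b2 / (2*\<alpha>) / 2) ^ (2 * j + n))
        = ((b1/b2)^n * (b1 * b2 / (2*\<alpha>) / 2) ^ (2 * j + n)) / (fact j * fact (j + n))"
      by simp
    also have "\<dots> = hc y n (j+n) * x^(j+n)"
      unfolding e hc_def by (simp add: power_add power_mult_distrib field_simps)
    finally show ?thesis .
  qed
  then have "(\<lambda>j. (b1/b2)^n * (1 / (fact j * fact (j + n)) * (b1 * b2 / (2*\<alpha>) / 2) ^ (2 * j + n))) sums hh y n x"
    using hh_shift[of y n x] by simp
  moreover have "(\<lambda>j. (b1/b2)^n * (1 / (fact j * fact (j + n)) * (b1 * b2 / (2*\<alpha>) / 2) ^ (2 * j + n)))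
      sums ((b1/b2)^n * besselI n (b1 * b2 / (2*\<alpha>)))"
    by (rule sums_mult[OF besselI_sums])
  ultimately show ?thesis unfolding y_def x_def using sums_unique2 by blast
qed




lemma gamma_nn:
  fixes \<alpha> :: real assumes "\<alpha> > 0"
  shows "(\<integral>\<^sup>+x. ennreal (indicator {0<..} x * (x^n * exp(-\<alpha>*x))) \<partial>lborel) = ennreal (fact n / \<alpha>^(Suc n))"
proof -
  have e: "(\<integral>\<^sup>+ x. ennreal (erlang_density 0 \<alpha> x * x ^ n) \<partial>lborel) = fact n / (\<alpha> ^ n)"
    using nn_integral_erlang_ith_moment[OF assms, of 0 n] by simp
  have "(\<integral>\<^sup>+x. ennreal (indicator {0<..} x * (x^n * exp(-\<alpha>*x))) \<partial>lborel)
      = (\<integral>\<^sup>+x. ennreal (1/\<alpha>) * ennreal (erlang_density 0 \<alpha> x * x ^ n) \<partial>lborel)"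
  proof (rule nn_integral_cong_AE)
    show "AE x in lborel. ennreal (indicator {0<..} x * (x ^ n * exp (- \<alpha> * x))) =
          ennreal (1 / \<alpha>) * ennreal (erlang_density 0 \<alpha> x * x ^ n)"
      using AE_lborel_singleton[of 0]
    proof eventually_elim
      case (elim x)
      then show ?case using assms
        by (auto simp: erlang_density_def ennreal_mult'[symmetric] indicator_def field_simps)
    qed
  qed
  also have "\<dots> = ennreal (1/\<alpha>) * (\<integral>\<^sup>+x. ennreal (erlang_density 0 \<alpha> x * x ^ n) \<partial>lborel)"
    by (rule nn_integral_cmult) auto
  also have "\<dots> = ennreal (fact n / \<alpha>^(Suc n))"
    unfolding e using assms by (simp add: ennreal_mult'[symmetric] divide_ennreal field_simps)
  finally show ?thesis .
qed

lemma gamma_int: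
  fixes \<alpha> :: real assumes "\<alpha> > 0"
  shows "integrable lborel (\<lambda>x. indicator {0<..} x * (x^n * exp(-\<alpha>*x)))"
    and "integral\<^sup>L lborel (\<lambda>x. indicator {0<..} x * (x^n * exp(-\<alpha>*x))) = fact n / \<alpha>^(Suc n)"
proof -
  have "integrable lborel (\<lambda>x. indicator {0<..} x * (x^n * exp(-\<alpha>*x))) \<and>
    integral\<^sup>L lborel (\<lambda>x. indicator {0<..} x * (x^n * exp(-\<alpha>*x))) = fact n / \<alpha>^(Suc n)"
  proof (subst nn_integral_eq_integrable[symmetric])
    show "(\<integral>\<^sup>+x. ennreal (indicator {0<..} x * (x^n * exp(-\<alpha>*x))) \<partial>lborel) = ennreal (fact n / \<alpha>^(Suc n))"
      by (rule gamma_nn[OF assms])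
  qed (use assms in \<open>auto simp: indicator_def\<close>)
  then show "integrable lborel (\<lambda>x. indicator {0<..} x * (x^n * exp(-\<alpha>*x)))"
    and "integral\<^sup>L lborel (\<lambda>x. indicator {0<..} x * (x^n * exp(-\<alpha>*x))) = fact n / \<alpha>^(Suc n)" by auto
qed

lemma fact_add_le: "fact (a+b) \<le> (2::real)^(a+b) * fact a * fact b"
proof -
  have "fact (a+b) \<le> (fact a * fact b * 2^(a+b) :: nat)"
    using binomial_fact_lemma[of a "a+b"] binomial_le_pow2[of "a+b" a]
    by (metis add_diff_cancel_left' le_add1 mult_le_mono2)
  then have "(fact (a+b)::real) \<le> of_nat (fact a * fact b * 2^(a+b))"
    by (metis of_nat_fact of_nat_le_iff)
  then show ?thesis by (simp add: algebra_simps)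
qed

lemma inner:
  fixes \<alpha> D R :: real and d :: "nat \<Rightarrow> real"
  assumes \<alpha>: "\<alpha> > 0" and R: "R \<ge> 0" and dB: "\<And>j. \<bar>d j\<bar> * fact (j+p) \<le> D * R^j / fact j"
  shows "integrable lborel (\<lambda>x. indicator {0<..} x * (x^i * exp(-\<alpha>*x) * (\<Sum>j. d j * x^(j+p))))"
    "(\<lambda>j. d j * (fact (i+j+p) / \<alpha>^(Suc (i+j+p)))) sums
       integral\<^sup>L lborel (\<lambda>x. indicator {0<..} x * (x^i * exp(-\<alpha>*x) * (\<Sum>j. d j * x^(j+p))))"
proof -
  define f where "f j x = d j * (indicator {0<..} x * (x^(i+j+p) * exp(-\<alpha>*x)))" for j and x::real
  have D: "D \<ge> 0"
  proof -
    have "0 \<le> \<bar>d 0\<bar> * fact (0+p)" by simp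
    also have "\<dots> \<le> D" using dB[of 0] by simp
    finally show ?thesis .
  qed
  have dB': "\<bar>d j\<bar> \<le> D * R^j / fact j" for j
  proof -
    have "\<bar>d j\<bar> \<le> \<bar>d j\<bar> * fact (j+p)"
      using fact_ge_1[of "j+p", where 'a=real] by (simp add: mult_le_cancel_left1)
    then show ?thesis using dB[of j] by linarith
  qed
  have sumx: "summable (\<lambda>j. \<bar>d j * x^(j+p)\<bar>)" for x :: real
  proof (rule summable_comparison_test[OF _ summable_expC[of "D*\<bar>x\<bar>^p" "R*\<bar>x\<bar>"]])
    show "\<exists>N. \<forall>n\<ge>N. norm \<bar>d n * x ^ (n + p)\<bar> \<le> D * \<bar>x\<bar> ^ p * (R * \<bar>x\<bar>) ^ n / fact n"
    proof (intro exI allI impI)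
      fix n :: nat
      have "norm \<bar>d n * x ^ (n + p)\<bar> = \<bar>d n\<bar> * \<bar>x\<bar>^(n+p)" by (simp add: abs_mult power_abs)
      also have "\<dots> \<le> D * R^n / fact n * \<bar>x\<bar>^(n+p)"
        by (rule mult_right_mono[OF dB']) simp
      also have "\<dots> = D * \<bar>x\<bar> ^ p * (R * \<bar>x\<bar>) ^ n / fact n"
        by (simp add: power_add power_mult_distrib field_simps)
      finally show "norm \<bar>d n * x ^ (n + p)\<bar> \<le> D * \<bar>x\<bar> ^ p * (R * \<bar>x\<bar>) ^ n / fact n" .
    qed
  qed
  have sumx': "summable (\<lambda>j. d j * x^(j+p))" for x :: real
    using summable_rabs_cancel[OF sumx] .
  have Feq: "(\<lambda>x. indicator {0<..} x * (x^i * exp(-\<alpha>*x) * (\<Sum>j. d j * x^(j+p)))) = (\<lambda>x. \<Sum>j. f j x)"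
  proof
    fix x :: real
    have "(\<Sum>j. f j x) = (\<Sum>j. (indicator {0<..} x * (x^i * exp(-\<alpha>*x))) * (d j * x^(j+p)))"
      unfolding f_def by (simp add: power_add algebra_simps)
    also have "\<dots> = indicator {0<..} x * (x^i * exp(-\<alpha>*x)) * (\<Sum>j. d j * x^(j+p))"
      by (rule suminf_mult[OF sumx'])
    finally show "indicator {0<..} x * (x^i * exp(-\<alpha>*x) * (\<Sum>j. d j * x^(j+p))) = (\<Sum>j. f j x)"
      by simp
  qed
  have intf: "integrable lborel (f j)" for j
    unfolding f_def by (rule integrable_mult_right[OF gamma_int(1)[OF \<alpha>]])
  have intfv: "integral\<^sup>L lborel (f j) = d j * (fact (i+j+p) / \<alpha>^(Suc (i+j+p)))" for j
    unfolding f_def using gamma_int(2)[OF \<alpha>, of "i+j+p"] by simp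
  have normf: "norm (f j x) = \<bar>d j\<bar> * (indicator {0<..} x * (x^(i+j+p) * exp(-\<alpha>*x)))" for j x
    unfolding f_def by (auto simp: abs_mult indicator_def)
  have intnf: "integral\<^sup>L lborel (\<lambda>x. norm (f j x)) = \<bar>d j\<bar> * (fact (i+j+p) / \<alpha>^(Suc (i+j+p)))" for j
    unfolding normf using gamma_int(2)[OF \<alpha>, of "i+j+p"] by simp
  have AEs: "AE x in lborel. summable (\<lambda>j. norm (f j x))"
  proof (rule AE_I2)
    fix x :: real
    have "summable (\<lambda>j. (indicator {0<..} x * (x^i * exp(-\<alpha>*x))) * \<bar>d j * x^(j+p)\<bar>)"
      by (rule summable_mult[OF sumx])
    moreover have "norm (f j x) = (indicator {0<..} x * (x^i * exp(-\<alpha>*x))) * \<bar>d j * x^(j+p)\<bar>" for j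
      unfolding normf by (auto simp: indicator_def abs_mult power_add)
    ultimately show "summable (\<lambda>j. norm (f j x))" by (simp only:)
  qed
  have sI: "summable (\<lambda>j. integral\<^sup>L lborel (\<lambda>x. norm (f j x)))"
    unfolding intnf
  proof (rule summable_comparison_test[OF _ summable_expC[of "D * 2^(i+p) * fact i / \<alpha>^(Suc (i+p))" "2*R/\<alpha>"]])
    show "\<exists>N. \<forall>n\<ge>N. norm (\<bar>d n\<bar> * (fact (i + n + p) / \<alpha> ^ Suc (i + n + p)))
             \<le> D * 2 ^ (i + p) * fact i / \<alpha> ^ Suc (i + p) * (2 * R / \<alpha>) ^ n / fact n"
    proof (intro exI allI impI)
      fix n :: nat
      have "norm (\<bar>d n\<bar> * (fact (i + n + p) / \<alpha> ^ Suc (i + n + p))) = \<bar>d n\<bar> * fact (i + (n + p)) / \<alpha> ^ Suc (i + n + p)"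
        using \<alpha> by (simp add: add.assoc)
      also have "\<dots> \<le> \<bar>d n\<bar> * (2^(i+(n+p)) * fact i * fact (n+p)) / \<alpha> ^ Suc (i + n + p)"
        by (intro divide_right_mono mult_left_mono fact_add_le) (use \<alpha> in auto)
      also have "\<dots> = (\<bar>d n\<bar> * fact (n+p)) * (2^(i+(n+p)) * fact i / \<alpha> ^ Suc (i + n + p))"
        by simp
      also have "\<dots> \<le> (D * R^n / fact n) * (2^(i+(n+p)) * fact i / \<alpha> ^ Suc (i + n + p))"
        by (rule mult_right_mono[OF dB]) (use \<alpha> in auto)
      also have "\<dots> = D * 2 ^ (i + p) * fact i / \<alpha> ^ Suc (i + p) * (2 * R / \<alpha>) ^ n / fact n"
      proof -
        have e1: "\<alpha> ^ Suc (i + n + p) = \<alpha> ^ Suc (i + p) * \<alpha>^n" by (simp add: power_add)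
        have e2: "(2::real)^(i+(n+p)) = 2^(i+p) * 2^n" by (simp add: power_add)
        have e3: "(2 * R / \<alpha>) ^ n = 2^n * R^n / \<alpha>^n" by (simp add: power_divide power_mult_distrib)
        show ?thesis unfolding e1 e2 e3 by (simp add: mult_ac)
      qed
      finally show "norm (\<bar>d n\<bar> * (fact (i + n + p) / \<alpha> ^ Suc (i + n + p)))
             \<le> D * 2 ^ (i + p) * fact i / \<alpha> ^ Suc (i + p) * (2 * R / \<alpha>) ^ n / fact n" .
    qed
  qed
  show "integrable lborel (\<lambda>x. indicator {0<..} x * (x^i * exp(-\<alpha>*x) * (\<Sum>j. d j * x^(j+p))))"
    unfolding Feq by (rule integrable_suminf[OF intf AEs sI])
  show "(\<lambda>j. d j * (fact (i+j+p) / \<alpha>^(Suc (i+j+p)))) sums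
       integral\<^sup>L lborel (\<lambda>x. indicator {0<..} x * (x^i * exp(-\<alpha>*x) * (\<Sum>j. d j * x^(j+p))))"
    unfolding Feq using sums_integral[OF intf AEs sI] by (simp add: intfv)
qed


lemma d_sumx:
  fixes D R :: real and d :: "nat \<Rightarrow> real"
  assumes R: "R \<ge> 0" and dB: "\<And>j. \<bar>d j\<bar> * fact (j+p) \<le> D * R^j / fact j"
  shows "summable (\<lambda>j. \<bar>d j * x^(j+p)\<bar>)"
proof -
  have dB': "\<bar>d j\<bar> \<le> D * R^j / fact j" for j
  proof -
    have "\<bar>d j\<bar> \<le> \<bar>d j\<bar> * fact (j+p)"
      using fact_ge_1[of "j+p", where 'a=real] by (simp add: mult_le_cancel_left1)
    then show ?thesis using dB[of j] by linarith
  qed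
  show ?thesis
  proof (rule summable_comparison_test[OF _ summable_expC[of "D*\<bar>x\<bar>^p" "R*\<bar>x\<bar>"]])
    show "\<exists>N. \<forall>n\<ge>N. norm \<bar>d n * x ^ (n + p)\<bar> \<le> D * \<bar>x\<bar> ^ p * (R * \<bar>x\<bar>) ^ n / fact n"
    proof (intro exI allI impI)
      fix n :: nat
      have "norm \<bar>d n * x ^ (n + p)\<bar> = \<bar>d n\<bar> * \<bar>x\<bar>^(n+p)" by (simp add: abs_mult power_abs)
      also have "\<dots> \<le> D * R^n / fact n * \<bar>x\<bar>^(n+p)"
        by (rule mult_right_mono[OF dB']) simp
      also have "\<dots> = D * \<bar>x\<bar> ^ p * (R * \<bar>x\<bar>) ^ n / fact n"
        by (simp add: power_add power_mult_distrib field_simps)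
      finally show "norm \<bar>d n * x ^ (n + p)\<bar> \<le> D * \<bar>x\<bar> ^ p * (R * \<bar>x\<bar>) ^ n / fact n" .
    qed
  qed
qed

lemma tbound:
  fixes \<alpha> D R :: real and d :: "nat \<Rightarrow> real"
  assumes \<alpha>: "\<alpha> > 0" and dB: "\<And>j. \<bar>d j\<bar> * fact (j+p) \<le> D * R^j / fact j"
  shows "\<bar>d n\<bar> * (fact (i + n + p) / \<alpha> ^ Suc (i + n + p))
             \<le> D * 2 ^ (i + p) * fact i / \<alpha> ^ Suc (i + p) * ((2 * R / \<alpha>) ^ n / fact n)"
proof -
      have "\<bar>d n\<bar> * (fact (i + n + p) / \<alpha> ^ Suc (i + n + p)) = \<bar>d n\<bar> * fact (i + (n + p)) / \<alpha> ^ Suc (i + n + p)"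
        using \<alpha> by (simp add: add.assoc)
      also have "\<dots> \<le> \<bar>d n\<bar> * (2^(i+(n+p)) * fact i * fact (n+p)) / \<alpha> ^ Suc (i + n + p)"
        by (intro divide_right_mono mult_left_mono fact_add_le) (use \<alpha> in auto)
      also have "\<dots> = (\<bar>d n\<bar> * fact (n+p)) * (2^(i+(n+p)) * fact i / \<alpha> ^ Suc (i + n + p))"
        by simp
      also have "\<dots> \<le> (D * R^n / fact n) * (2^(i+(n+p)) * fact i / \<alpha> ^ Suc (i + n + p))"
        by (rule mult_right_mono[OF dB]) (use \<alpha> in auto)
      also have "\<dots> = D * 2 ^ (i + p) * fact i / \<alpha> ^ Suc (i + p) * ((2 * R / \<alpha>) ^ n / fact n)"
      proof -
        have e1: "\<alpha> ^ Suc (i + n + p) = \<alpha> ^ Suc (i + p) * \<alpha>^n" by (simp add: power_add)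
        have e2: "(2::real)^(i+(n+p)) = 2^(i+p) * 2^n" by (simp add: power_add)
        have e3: "(2 * R / \<alpha>) ^ n = 2^n * R^n / \<alpha>^n" by (simp add: power_divide power_mult_distrib)
        show ?thesis unfolding e1 e2 e3 by (simp add: mult_ac)
      qed
      finally show ?thesis .
qed



theorem mainTheorem15:
  fixes m :: nat and \<alpha> \<beta>1 \<beta>2 :: real
  assumes "m \<ge> 1" and "\<alpha> > 0" and "\<beta>1 > 0" and "\<beta>2 > 0"
  shows "((\<lambda>x. exp (- \<alpha> * x) * besselJ 0 (\<beta>1 * sqrt x) * besselJ m (\<beta>2 * sqrt x)
              * x powr (real m / 2))
          has_integral
          (1 / \<alpha> * exp (- \<beta>2\<^sup>2 / (4 * \<alpha>)) *
           ((deriv ^^ m) (\<lambda>x. exp (- x) * (x / \<alpha>) powr (real m / 2)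
                               * besselI m (\<beta>2 * sqrt (x / \<alpha>))) (\<beta>1\<^sup>2 / (4 * \<alpha>))))) {0<..}
       \<and> 1 / \<alpha> * exp (- \<beta>2\<^sup>2 / (4 * \<alpha>)) *
           ((deriv ^^ m) (\<lambda>x. exp (- x) * (x / \<alpha>) powr (real m / 2)
                               * besselI m (\<beta>2 * sqrt (x / \<alpha>))) (\<beta>1\<^sup>2 / (4 * \<alpha>)))
         = 1 / \<alpha> * (\<beta>2 / (2 * \<alpha>)) ^ m * exp (- (\<beta>1\<^sup>2 + \<beta>2\<^sup>2) / (4 * \<alpha>)) *
           (\<Sum>n\<le>m. (-1) ^ n * real (m choose n) * (\<beta>1 / \<beta>2) ^ n
                      * besselI n (\<beta>1 * \<beta>2 / (2 * \<alpha>)))"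
proof -
  have \<alpha>: "\<alpha> > 0" and b1: "\<beta>1 > 0" and b2: "\<beta>2 > 0" using assms by auto
  define a where "a = \<beta>1^2/4"
  define x0 where "x0 = \<beta>1^2/(4*\<alpha>)"
  define y where "y = \<beta>2^2/(4*\<alpha>)"
  define c where "c = (\<beta>2/(2*\<alpha>))^m"
  define dJ where "dJ j = (-1)^j / (fact j * fact (j+m)) * (\<beta>2/2)^(2*j+m)" for j
  define e where "e i = (-1)^i / (fact i * fact i) * a^i" for i
  define S where "S x = (\<Sum>j. dJ j * x^(j+m))" for x :: real
  define Sabs where "Sabs x = (\<Sum>j. \<bar>dJ j\<bar> * x^(j+m))" for x :: real
  define f where "f i x = e i * (indicator {0<..} x * (x^i * exp(-\<alpha>*x) * S x))" for i and x :: real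
  define Sm where "Sm = (\<Sum>n\<le>m. (-1)^n * real (m choose n) * hh y n x0)"
  define Fm where "Fm = (\<lambda>x. exp (- x) * (x / \<alpha>) powr (real m / 2) * besselI m (\<beta>2 * sqrt (x / \<alpha>)))"
  define DD where "DD = (\<beta>2/2)^m"
  define RR where "RR = \<beta>2^2/4"
  have x0: "x0 > 0" unfolding x0_def using \<alpha> b1 by simp
  have RR: "RR \<ge> 0" unfolding RR_def by simp
  have a0: "a \<ge> 0" unfolding a_def by simp
  have dB: "\<bar>dJ j\<bar> * fact (j+m) \<le> DD * RR^j / fact j" for j
  proof -
    have "\<bar>dJ j\<bar> = (\<beta>2/2)^(2*j+m) / (fact j * fact (j+m))"
      unfolding dJ_def using b2 by (simp add: abs_mult power_abs)
    also have "(\<beta>2/2)^(2*j+m) = DD * RR^j"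
    proof -
      have p1a: "(\<beta>2/2)^2 = \<beta>2^2/4" by (simp add: power_divide)
      have "(\<beta>2/2)^(2*j+m) = (\<beta>2^2/4)^j * (\<beta>2/2)^m" by (simp add: power_add power_mult p1a)
      then show ?thesis unfolding DD_def RR_def by (simp only: mult.commute)
    qed
    finally show ?thesis by simp
  qed
  have dBa: "\<bar>\<bar>dJ j\<bar>\<bar> * fact (j+m) \<le> DD * RR^j / fact j" for j using dB by simp

  have Dm: "(deriv ^^ m) Fm x0 = c * exp (-x0) * Sm"
  proof -
    have eqS: "Fm x = c * exp (-x) * hh y m x" if "x \<in> {0<..}" for x
    proof -
      have "(x/\<alpha>) powr (real m / 2) * besselI m (\<beta>2 * sqrt (x/\<alpha>)) = (\<beta>2/(2*\<alpha>))^m * hh (\<beta>2^2/(4*\<alpha>)) m x"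
        by (rule Im_eq) (use that \<alpha> in auto)
      then show ?thesis unfolding Fm_def c_def y_def by (simp add: mult_ac)
    qed
    have "(deriv ^^ m) Fm x0 = (deriv ^^ m) (\<lambda>x. c * exp (-x) * hh y m x) x0"
      by (rule deriv_funpow_cong[OF open_greaterThan eqS]) (use x0 in auto)
    also have "\<dots> = c * exp (-x0) * (\<Sum>l\<le>m. real (m choose l) * (-1)^l * hh y (m-m+l) x0)"
      by (simp add: Gderiv)
    also have "\<dots> = c * exp (-x0) * Sm"
      unfolding Sm_def by (simp add: mult.commute)
    finally show ?thesis .
  qed
  have RHS: "(\<Sum>n\<le>m. (-1) ^ n * real (m choose n) * (\<beta>1 / \<beta>2) ^ n * besselI n (\<beta>1 * \<beta>2 / (2 * \<alpha>))) = Sm"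
    unfolding Sm_def
  proof (rule sum.cong[OF refl])
    fix n assume "n \<in> {..m}"
    show "(-1) ^ n * real (m choose n) * (\<beta>1 / \<beta>2) ^ n * besselI n (\<beta>1 * \<beta>2 / (2 * \<alpha>)) =
         (-1) ^ n * real (m choose n) * hh y n x0"
      using In_eq[OF b2 \<alpha>, of \<beta>1 n] unfolding y_def x0_def by (simp add: mult.assoc)
  qed

  note inn = inner[OF \<alpha> RR dB, of _, folded S_def]
  note innabs = inner[OF \<alpha> RR dBa, of _, folded Sabs_def]
  have Ii: "integral\<^sup>L lborel (\<lambda>x. indicator {0<..} x * (x^i * exp(-\<alpha>*x) * S x))
       = c / \<alpha>^(Suc i) * (exp (-y) * (fact (i+m) * PP y m i))" for i
  proof -
    have t: "dJ j * (fact (i+j+m) / \<alpha>^(Suc (i+j+m))) = c / \<alpha>^(Suc i) * ((-y)^j * fact (i+j+m) / (fact j * fact (j+m)))" for j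
    proof -
      have p1a: "(\<beta>2/2)^2 = \<beta>2^2/4" by (simp add: power_divide)
      have p1: "(\<beta>2/2)^(2*j+m) = (\<beta>2^2/4)^j * (\<beta>2/2)^m" by (simp add: power_add power_mult p1a)
      have p2: "\<alpha>^(Suc (i+j+m)) = \<alpha>^(Suc i) * \<alpha>^j * \<alpha>^m" by (simp add: power_add)
      have p3: "c = (\<beta>2/2)^m/\<alpha>^m" unfolding c_def by (simp add: power_divide power_mult_distrib)
      have p4: "(-y)^j = (-1)^j * (\<beta>2^2/4)^j/\<alpha>^j" unfolding y_def
        by (simp add: power_divide power_mult_distrib power_minus')
      show ?thesis unfolding dJ_def p1 p2 p3 p4 using \<alpha> by (simp add: field_simps)
    qed
    have "(\<lambda>j. dJ j * (fact (i+j+m) / \<alpha>^(Suc (i+j+m)))) sums (c / \<alpha>^(Suc i) * (exp (-y) * (fact (i+m) * PP y m i)))"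
      unfolding t by (rule sums_mult[OF kummerA])
    then show ?thesis using inn(2)[of i] sums_unique2 by blast
  qed
  have intf: "integrable lborel (f i)" for i
    unfolding f_def by (rule integrable_mult_right[OF inn(1)])
  have intfv: "integral\<^sup>L lborel (f i) = 1/\<alpha> * c * exp (-y) * ((-x0)^i * fact (i+m) / (fact i * fact i) * PP y m i)" for i
  proof -
    have "integral\<^sup>L lborel (f i) = e i * (c / \<alpha>^(Suc i) * (exp (-y) * (fact (i+m) * PP y m i)))"
      unfolding f_def integral_mult_right_zero Ii ..
    also have "\<dots> = 1/\<alpha> * c * exp (-y) * ((-x0)^i * fact (i+m) / (fact i * fact i) * PP y m i)"
    proof -
      have "(-x0)^i = (-1)^i * a^i / \<alpha>^i" unfolding x0_def a_def
        by (simp add: power_divide power_mult_distrib power_minus')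
      then show ?thesis unfolding e_def using \<alpha> by (simp add: field_simps)
    qed
    finally show ?thesis .
  qed
  have ebound: "\<bar>e i\<bar> * \<bar>x\<bar>^i \<le> (a * \<bar>x\<bar>)^i / fact i" for i x
  proof -
    have "\<bar>e i\<bar> * \<bar>x\<bar>^i = (a * \<bar>x\<bar>)^i / (fact i * fact i)"
      unfolding e_def using a0 by (simp add: abs_mult power_abs power_mult_distrib)
    also have "\<dots> \<le> (a * \<bar>x\<bar>)^i / fact i"
      by (rule divide_left_mono) (auto simp: fact_ge_1 a0)
    finally show ?thesis .
  qed
  have AEs: "AE x in lborel. summable (\<lambda>i. norm (f i x))"
  proof (rule AE_I2)
    fix x :: real
    have s1: "summable (\<lambda>i. \<bar>e i\<bar> * \<bar>x\<bar>^i)"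
      by (rule summable_comparison_test[OF _ summable_expC[of 1 "a*\<bar>x\<bar>"]]) (use ebound in auto)
    have "norm (f i x) = (\<bar>e i\<bar> * \<bar>x\<bar>^i) * (indicator {0<..} x * (exp(-\<alpha>*x) * \<bar>S x\<bar>))" for i
      unfolding f_def by (auto simp: abs_mult indicator_def power_abs)
    then show "summable (\<lambda>i. norm (f i x))"
      using summable_mult2[OF s1] by (simp only:)
  qed
  have sI: "summable (\<lambda>i. integral\<^sup>L lborel (\<lambda>x. norm (f i x)))"
  proof -
    define E0 where "E0 = exp (2*RR/\<alpha>)"
    have Kb: "integral\<^sup>L lborel (\<lambda>x. indicator {0<..} x * (x^i * exp(-\<alpha>*x) * Sabs x))
        \<le> DD * 2^(i+m) * fact i / \<alpha>^Suc(i+m) * E0" for i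
      unfolding E0_def
    proof (rule sums_le[OF _ innabs(2)[of i] sums_mult[OF exp_sums[of "2*RR/\<alpha>"]]])
      fix n
      show "\<bar>dJ n\<bar> * (fact (i + n + m) / \<alpha> ^ Suc (i + n + m)) \<le>
          DD * 2 ^ (i + m) * fact i / \<alpha> ^ Suc (i + m) * ((2 * RR / \<alpha>) ^ n / fact n)"
        using tbound[OF \<alpha> dBa, of n i] by simp
    qed
    have nb: "integral\<^sup>L lborel (\<lambda>x. norm (f i x)) \<le> \<bar>e i\<bar> * integral\<^sup>L lborel (\<lambda>x. indicator {0<..} x * (x^i * exp(-\<alpha>*x) * Sabs x))" for i
    proof -
      have "integral\<^sup>L lborel (\<lambda>x. norm (f i x)) \<le> integral\<^sup>L lborel (\<lambda>x. \<bar>e i\<bar> * (indicator {0<..} x * (x^i * exp(-\<alpha>*x) * Sabs x)))"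
      proof (rule integral_mono)
        show "integrable lborel (\<lambda>x. norm (f i x))" by (rule integrable_norm[OF intf])
        show "integrable lborel (\<lambda>x. \<bar>e i\<bar> * (indicator {0<..} x * (x^i * exp(-\<alpha>*x) * Sabs x)))"
          by (rule integrable_mult_right[OF innabs(1)])
        fix x :: real
        show "norm (f i x) \<le> \<bar>e i\<bar> * (indicator {0<..} x * (x^i * exp(-\<alpha>*x) * Sabs x))"
        proof (cases "x > 0")
          case True
          have "\<bar>S x\<bar> \<le> (\<Sum>j. \<bar>dJ j * x^(j+m)\<bar>)"
            unfolding S_def by (rule summable_rabs[OF d_sumx[OF RR dB]])
          also have "\<dots> = Sabs x" unfolding Sabs_def using True by (simp add: abs_mult)
          finally have "\<bar>S x\<bar> \<le> Sabs x" .
          then show ?thesis unfolding f_def using True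
            by (simp add: abs_mult mult_left_mono)
        qed (simp add: f_def)
      qed
      then show ?thesis by simp
    qed
    show ?thesis
    proof (rule summable_comparison_test[OF _ summable_expC[of "DD * 2^m * E0 / \<alpha>^Suc m" "2*a/\<alpha>"]])
      show "\<exists>N. \<forall>n\<ge>N. norm (integral\<^sup>L lborel (\<lambda>x. norm (f n x))) \<le> DD * 2 ^ m * E0 / \<alpha> ^ Suc m * (2 * a / \<alpha>) ^ n / fact n"
      proof (intro exI allI impI)
        fix n :: nat
        have "norm (integral\<^sup>L lborel (\<lambda>x. norm (f n x))) = integral\<^sup>L lborel (\<lambda>x. norm (f n x))"
          by (simp add: integral_nonneg_AE)
        also have "\<dots> \<le> \<bar>e n\<bar> * (DD * 2^(n+m) * fact n / \<alpha>^Suc(n+m) * E0)"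
          by (rule order.trans[OF nb mult_left_mono[OF Kb]]) simp
        also have "\<dots> = DD * 2 ^ m * E0 / \<alpha> ^ Suc m * (2 * a / \<alpha>) ^ n / fact n"
        proof -
          have ea: "\<bar>e n\<bar> = a^n / (fact n * fact n)" unfolding e_def using a0 by (simp add: abs_mult)
          have q1: "(2::real)^(n+m) = 2^n * 2^m" by (simp add: power_add)
          have q2: "\<alpha>^Suc(n+m) = \<alpha>^n * \<alpha>^Suc m" by (simp add: power_add)
          have q3: "(2 * a / \<alpha>) ^ n = 2^n * a^n / \<alpha>^n" by (simp add: power_divide power_mult_distrib)
          show ?thesis unfolding ea q1 q2 q3 by (simp add: field_simps)
        qed
        finally show "norm (integral\<^sup>L lborel (\<lambda>x. norm (f n x))) \<le> DD * 2 ^ m * E0 / \<alpha> ^ Suc m * (2 * a / \<alpha>) ^ n / fact n" .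
      qed
    qed
  qed
  have intS: "integrable lborel (\<lambda>x. \<Sum>i. f i x)"
    by (rule integrable_suminf[OF intf AEs sI])
  have sumsI: "(\<lambda>i. integral\<^sup>L lborel (f i)) sums integral\<^sup>L lborel (\<lambda>x. \<Sum>i. f i x)"
    by (rule sums_integral[OF intf AEs sI])
  have V: "integral\<^sup>L lborel (\<lambda>x. \<Sum>i. f i x) = 1/\<alpha> * c * exp (-y) * (exp (-x0) * Sm)"
  proof -
    have "(\<lambda>i. integral\<^sup>L lborel (f i)) sums (1/\<alpha> * c * exp (-y) * (exp (-x0) * Sm))"
      unfolding intfv Sm_def by (rule sums_mult[OF Wsum])
    then show ?thesis using sumsI sums_unique2 by blast
  qed
  have sumf: "(\<lambda>x. \<Sum>i. f i x) = (\<lambda>x. if x \<in> {0<..} then exp (- \<alpha> * x) * besselJ 0 (\<beta>1 * sqrt x) * besselJ m (\<beta>2 * sqrt x)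
              * x powr (real m / 2) else 0)"
  proof
    fix x :: real
    show "(\<Sum>i. f i x) = (if x \<in> {0<..} then exp (- \<alpha> * x) * besselJ 0 (\<beta>1 * sqrt x) * besselJ m (\<beta>2 * sqrt x)
              * x powr (real m / 2) else 0)"
    proof (cases "x > 0")
      case True
      have SJ: "S x = besselJ m (\<beta>2 * sqrt x) * x powr (real m / 2)"
      proof -
        have "(\<lambda>j. ((-1)^j / (fact j * fact (j+m)) * (\<beta>2/2)^(2*j+m)) * x^(j+m)) sums (besselJ m (\<beta>2 * sqrt x) * x powr (real m / 2))"
          by (rule Jm_sums[OF True])
        then show ?thesis unfolding S_def dJ_def by (simp add: sums_iff)
      qed
      have J0: "(\<lambda>i. e i * x^i) sums besselJ 0 (\<beta>1 * sqrt x)"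
      proof -
        have "(\<lambda>i. (-1)^i / (fact i * fact i) * (\<beta>1^2/4 * x)^i) sums besselJ 0 (\<beta>1 * sqrt x)"
          by (rule J0_sums) (use True in simp)
        moreover have "e i * x^i = (-1)^i / (fact i * fact i) * (\<beta>1^2/4 * x)^i" for i
          unfolding e_def a_def by (simp only: power_mult_distrib[symmetric] mult.assoc)
        ultimately show ?thesis by simp
      qed
      have "(\<lambda>i. (e i * x^i) * (exp(-\<alpha>*x) * S x)) sums (besselJ 0 (\<beta>1 * sqrt x) * (exp(-\<alpha>*x) * S x))"
        by (rule sums_mult2[OF J0])
      moreover have "f i x = (e i * x^i) * (exp(-\<alpha>*x) * S x)" for i
        unfolding f_def using True by simp
      ultimately have "(\<lambda>i. f i x) sums (besselJ 0 (\<beta>1 * sqrt x) * (exp(-\<alpha>*x) * S x))" by simp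
      then show ?thesis using True unfolding SJ by (simp add: sums_iff mult_ac)
    next
      case False
      then show ?thesis by (simp add: f_def)
    qed
  qed
  have HI: "((\<lambda>x. exp (- \<alpha> * x) * besselJ 0 (\<beta>1 * sqrt x) * besselJ m (\<beta>2 * sqrt x)
              * x powr (real m / 2)) has_integral (1/\<alpha> * c * exp (-y) * (exp (-x0) * Sm))) {0<..}"
    using has_integral_integral_lborel[OF intS] unfolding V unfolding sumf has_integral_restrict_UNIV .
  have val: "1 / \<alpha> * exp (- \<beta>2\<^sup>2 / (4 * \<alpha>)) * ((deriv ^^ m) Fm (\<beta>1\<^sup>2 / (4 * \<alpha>))) = 1/\<alpha> * c * exp (-y) * (exp (-x0) * Sm)"
    using Dm unfolding x0_def y_def by simp
  have val2: "1/\<alpha> * c * exp (-y) * (exp (-x0) * Sm) = 1 / \<alpha> * (\<beta>2 / (2 * \<alpha>)) ^ m * exp (- (\<beta>1\<^sup>2 + \<beta>2\<^sup>2) / (4 * \<alpha>)) * Sm"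
  proof -
    have "exp (-y) * exp (-x0) = exp (- (\<beta>1\<^sup>2 + \<beta>2\<^sup>2) / (4 * \<alpha>))"
    proof -
      have ee: "-y + -x0 = - (\<beta>1\<^sup>2 + \<beta>2\<^sup>2) / (4 * \<alpha>)"
        unfolding x0_def y_def using \<alpha> by (simp add: field_simps)
      show ?thesis by (simp only: exp_add[symmetric] ee)
    qed
    then show ?thesis unfolding c_def by (simp add: mult_ac)
  qed
  have val': "1 / \<alpha> * exp (- \<beta>2\<^sup>2 / (4 * \<alpha>)) *
           ((deriv ^^ m) (\<lambda>x. exp (- x) * (x / \<alpha>) powr (real m / 2)
                               * besselI m (\<beta>2 * sqrt (x / \<alpha>))) (\<beta>1\<^sup>2 / (4 * \<alpha>)))
      = 1/\<alpha> * c * exp (-y) * (exp (-x0) * Sm)"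
    using val unfolding Fm_def .
  show ?thesis unfolding val' RHS by (rule conjI[OF HI val2])
qed

end
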